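(* Let $\Theta$ be an open saturated branch of a tableau in $\mathbf{TAB}_{\mathbf{IB}}$ with root formula $@_{i_0}\varphi_0$, let $\mathcal{M}^\Theta=(W^\Theta,R^\Theta,V^\Theta)$ be its model, $W^\Theta_r=\{w\in W^\Theta\mid wR^\Theta w\}$, and $\mathcal{M}^\Theta_B$ the bulldozed model of $\mathcal{M}^\Theta$. Let $i$ be an identity urfather on $\Theta$ and $\varphi$ a formula such that $@_i\varphi$ is a quasi-subformula of $@_{i_0}\varphi_0$. Then $\mathcal{M}^\Theta,i\models\varphi$ if and only if $\mathcal{M}^\Theta_B,i_B\models\varphi$, where $i_B=(i,0)$ if $i\in W^\Theta_r$ and $i_B=i$ otherwise.
   Context: Hybrid language: fix disjoint countably infinite sets $\mathbf{Prop}$ (propositional variables) and $\mathbf{Nom}$ (nominals). Formulas: $\varphi ::= p \mid i \mid \neg\varphi \mid \varphi\land\varphi \mid \Diamond\varphi \mid @_i\varphi$ with $p\in\mathbf{Prop}$, $i\in\mathbf{Nom}$; $\Box\varphi$ abbreviates $\neg\Diamond\neg\varphi$. A model $\mathcal{M}=(W,R,V)$ has $W$ nonempty, $R\subseteq W\times W$, and $V:\mathbf{Prop}\cup\mathbf{Nom}\to\mathcal{P}(W)$ with $V(i)=\{i^V\}$ a singleton for each nominal $i$. Satisfaction: $\mathcal{M},w\models p$ iff $w\in V(p)$; $\mathcal{M},w\models i$ iff $w=i^V$; Boolean clauses as usual; $\mathcal{M},w\models\Diamond\varphi$ iff there is $v$ with $wRv$ and $\mathcal{M},v\models\varphi$;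 $\mathcal{M},w\models @_i\varphi$ iff $\mathcal{M},i^V\models\varphi$. Tableau calculus $\mathbf{TAB}_{\mathbf{IB}}$. A tableau is a well-founded tree whose nodes are formulas of the form $@_i\varphi$; its root is a formula $@_i\varphi$ (the root formula) where $i$ does not occur in $\varphi$. A branch is a maximal path; $\varphi\in\Theta$ means $\varphi$ occurs on branch $\Theta$. Each branch is extended by applying the rules below to its formulas as often as possible, except that no further formula is added to a branch once either (i) every new formula generated by applying any rule already occurs on the branch, or (ii) the branch is closed, i.e. contains $@_i\varphi$ and $@_i\neg\varphi$ for some formula $\varphi$ and nominal $i$. Open means not closed. A branch is saturated if every new formula generated by applying some rule already occurs on it. An accessibility formula is a formula $@_i\Diamond j$ added by rule $[\Diamond]$ (with $j$ the new nominal). Rules (premises already on the branch; conclusions added to it): [$\neg\neg$] from $@_i\neg\neg\varphi$ add $@_i\varphi$; [$\land$] from $@_i(\varphi\land\psi)$ add $@_i\varphi$ and $@_i\psi$; [$\neg\land$] from $@_i\neg(\varphi\land\psi)$ split the branch into one extended by $@_i\neg\varphi$ and one extended by $@_i\neg\psi$; [$\Diamond$] from $@_i\Diamond\varphi$, which is not an accessibility formula, add $@_i\Diamond j$ and $@_j\varphi$ where $j$ is a nominal not occurring on the branch; this rule is applied at most once per formula, and only if $i$ is a quasi-urfather on the branch (defined below); [$\neg\Diamond$] from $@_i\neg\Diamond\varphi$ and $@_i\Diamond j$ add $@_j\neg\varphi$; [$\Box_{sym}$] from $@_i\Box\varphi$ and $@_j\Diamond i$ add $@_j\varphi$; [$@$]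 from $@_i@_j\varphi$ add $@_j\varphi$; [$\neg@$] from $@_i\neg@_j\varphi$ add $@_j\neg\varphi$; [$Id$] from $@_i\varphi$, which is not an accessibility formula, and $@_i j$ add $@_j\varphi$; [$Ref$] for any nominal $i$ occurring on the branch add $@_i i$; ($\mathcal{I}$) for any nominal $i$ occurring on the branch add $@_i\neg\Diamond i$. Auxiliary notions for a branch $\Theta$. $@_i\varphi$ is a quasi-subformula of $@_j\psi$ if $\varphi$ is a subformula of $\psi$, or $\varphi=\neg\chi$ with $\chi$ a subformula of $\psi$. For a nominal $i$ occurring in $\Theta$, $T^\Theta(i)=\{\varphi \mid @_i\varphi\in\Theta$ and $@_i\varphi$ is a quasi-subformula of the root formula$\}$. Nominals $i,j$ are twins if $T^\Theta(i)=T^\Theta(j)$. $i\prec_\Theta j$ if $j$ was introduced by applying $[\Diamond]$ to a formula $@_i\Diamond\varphi$; $\prec_\Theta^*$ is its reflexive transitive closure. A nominal $i$ is a quasi-urfather on $\Theta$ if there are no twins $j\neq k$ with $j\prec_\Theta^* i$ and $k\prec_\Theta^* i$. The identity urfather $v_\Theta(i)$ of a nominal $i$ occurring in $\Theta$ is the earliest introduced nominal $j$ on $\Theta$ such that $j$ is a twin of $i$ and $j$ is a quasi-urfather; it may fail to exist, and $\mathrm{dom}(v_\Theta)$ denotes the set of nominals for which it exists. A nominal is called an identity urfather on $\Theta$ if it is the identity urfather of some nominal (equivalently $v_\Theta(i)=i$). The model $\mathcal{M}^\Theta=(W^\Theta,R^\Theta,V^\Theta)$ of an open saturated branch $\Theta$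 with root formula $@_{i_0}\varphi_0$: $W^\Theta$ is the set of identity urfathers on $\Theta$; $R^\Theta=\{(v_\Theta(i),v_\Theta(j)) \mid @_i\Diamond j\in\Theta,\ i,j\in\mathrm{dom}(v_\Theta)\}\cup\{(v_\Theta(j),v_\Theta(i)) \mid @_i\Diamond j\in\Theta,\ i,j\in\mathrm{dom}(v_\Theta)\}$; $V^\Theta(p)=\{v_\Theta(i)\mid @_i p\in\Theta\}$ for $p\in\mathbf{Prop}$; for a nominal $i$, $V^\Theta(i)=\{v_\Theta(i)\}$ if $i\in\mathrm{dom}(v_\Theta)$ and $V^\Theta(i)=\{i_0\}$ otherwise. Bulldozed model: given a model $\mathcal{M}=(W,R,V)$, let $W_r=\{w\in W\mid wRw\}$, $W^-=W\setminus W_r$, and $W_B=W^-\cup\{(w,n)\mid w\in W_r,\ n\in\{0,1\}\}$. Let $\alpha:W_B\to W$ be $\alpha(w)=w$ for $w\in W^-$ and $\alpha((w,n))=w$. Define $wR_Bv$ iff one of: ($w\in W^-$ or $v\in W^-$) and $\alpha(w)R\alpha(v)$; or $w=(w',m)$, $v=(v',n)$, $w'\neq v'$ and $w'Rv'$; or $w\neq v$ and $\alpha(w)=\alpha(v)$. Define $V_B(p)=\{w\in W_B\mid\alpha(w)\in V(p)\}$ for $p\in\mathbf{Prop}$; for a nominal $i$, $V_B(i)=\{(i^V,0)\}$ if $i^V\in W_r$, and $V_B(i)=V(i)$ otherwise. The bulldozed model is $\mathcal{M}_B=(W_B,R_B,V_B)$; $\mathcal{M}^\Theta_B$ denotes the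 bulldozed model of $\mathcal{M}^\Theta$. *)

theory Defs
  imports Main
begin

datatype fm = Pro nat | Nom nat | Neg fm | Con fm fm | Dia fm | At nat fm

definition Box :: "fm \<Rightarrow> fm" where
  "Box \<phi> = Neg (Dia (Neg \<phi>))"

fun noms :: "fm \<Rightarrow> nat list" where
  "noms (Pro p) = []"
| "noms (Nom i) = [i]"
| "noms (Neg \<phi>) = noms \<phi>"
| "noms (Con \<phi> \<psi>) = noms \<phi> @ noms \<psi>"
| "noms (Dia \<phi>) = noms \<phi>"
| "noms (At i \<phi>) = i # noms \<phi>"

fun subs :: "fm \<Rightarrow> fm set" where
  "subs (Pro p) = {Pro p}"
| "subs (Nom i) = {Nom i}"
| "subs (Neg \<phi>) = insert (Neg \<phi>) (subs \<phi>)"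
| "subs (Con \<phi> \<psi>) = insert (Con \<phi> \<psi>) (subs \<phi> \<union> subs \<psi>)"
| "subs (Dia \<phi>) = insert (Dia \<phi>) (subs \<phi>)"
| "subs (At i \<phi>) = insert (At i \<phi>) (subs \<phi>)"

text \<open>@_i phi is a quasi-subformula of @_j psi (this does not depend on i, j).\<close>
definition quasi_sub :: "nat \<Rightarrow> fm \<Rightarrow> nat \<Rightarrow> fm \<Rightarrow> bool" where
  "quasi_sub i \<phi> j \<psi> \<longleftrightarrow> \<phi> \<in> subs \<psi> \<or> (\<exists>\<chi>. \<phi> = Neg \<chi> \<and> \<chi> \<in> subs \<psi>)"

text \<open>VP gives the valuation of propositional variables, VN i is the unique world i^V
with V(i) = {i^V}.\<close>
record 'w model =
  W :: "'w set"
  Rel :: "('w \<times> 'w) set"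
  VP :: "nat \<Rightarrow> 'w set"
  VN :: "nat \<Rightarrow> 'w"

fun sat :: "'w model \<Rightarrow> 'w \<Rightarrow> fm \<Rightarrow> bool" where
  "sat M w (Pro p) \<longleftrightarrow> w \<in> VP M p"
| "sat M w (Nom i) \<longleftrightarrow> w = VN M i"
| "sat M w (Neg \<phi>) \<longleftrightarrow> \<not> sat M w \<phi>"
| "sat M w (Con \<phi> \<psi>) \<longleftrightarrow> sat M w \<phi> \<and> sat M w \<psi>"
| "sat M w (Dia \<phi>) \<longleftrightarrow> (\<exists>v. (w, v) \<in> Rel M \<and> sat M v \<phi>)"
| "sat M w (At i \<phi>) \<longleftrightarrow> sat M (VN M i) \<phi>"

definition refl_worlds :: "'w model \<Rightarrow> 'w set" where
  "refl_worlds M = {w \<in> W M. (w, w) \<in> Rel M}"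

text \<open>Worlds of the bulldozed model: Inl w for w in W^-, Inr (w, n) for w in W_r, n in {0,1}.\<close>
fun alpha :: "'w + ('w \<times> nat) \<Rightarrow> 'w" where
  "alpha (Inl w) = w"
| "alpha (Inr (w, n)) = w"

definition bull_worlds :: "'w model \<Rightarrow> ('w + ('w \<times> nat)) set" where
  "bull_worlds M = Inl ` (W M - refl_worlds M)
     \<union> {Inr (w, n) | w n. w \<in> refl_worlds M \<and> n \<in> {0, 1}}"

definition bulldoze :: "'w model \<Rightarrow> ('w + ('w \<times> nat)) model" where
  "bulldoze M = \<lparr> W = bull_worlds M,
     Rel = {(x, y). x \<in> bull_worlds M \<and> y \<in> bull_worlds M \<and>
              (((isl x \<or> isl y) \<and> (alpha x, alpha y) \<in> Rel M)
               \<or> (\<exists>w' m v' n. x = Inr (w', m) \<and> y = Inr (v', n) \<and> w' \<noteq> v' \<and> (w', v') \<in> Rel M)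
               \<or> (x \<noteq> y \<and> alpha x = alpha y))},
     VP = (\<lambda>p. {x \<in> bull_worlds M. alpha x \<in> VP M p}),
     VN = (\<lambda>i. if VN M i \<in> refl_worlds M then Inr (VN M i, 0) else Inl (VN M i)) \<rparr>"

text \<open>A branch with root formula @_{i0} phi0 is represented by i0, phi0 and the list of
rule applications performed on it, in order. Add phi adds a single formula by one of the
rules other than [Dia] (a two-conclusion rule [and] is performed as two Add steps; for the
splitting rule [not-and] the branch receives one of the two conclusions).
DiaApp i phi j is the application of [Dia] to @_i Dia phi with new nominal j; it adds the
accessibility formula @_i Dia j and the formula @_j phi.\<close>

datatype step = Add fm | DiaApp nat fm nat

text \<open>Nodes of a branch; the boolean flag marks accessibility formulas.\<close>
fun step_nodes :: "step \<Rightarrow> (fm \<times> bool) list" where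
  "step_nodes (Add \<phi>) = [(\<phi>, False)]"
| "step_nodes (DiaApp i \<phi> j) = [(At i (Dia (Nom j)), True), (At j \<phi>, False)]"

definition nodes :: "nat \<Rightarrow> fm \<Rightarrow> step list \<Rightarrow> (fm \<times> bool) list" where
  "nodes i0 \<phi>0 ss = (At i0 \<phi>0, False) # concat (map step_nodes ss)"

definition fmls :: "nat \<Rightarrow> fm \<Rightarrow> step list \<Rightarrow> fm set" where
  "fmls i0 \<phi>0 ss = fst ` set (nodes i0 \<phi>0 ss)"

definition plain_fmls :: "nat \<Rightarrow> fm \<Rightarrow> step list \<Rightarrow> fm set" where
  "plain_fmls i0 \<phi>0 ss = {\<phi>. (\<phi>, False) \<in> set (nodes i0 \<phi>0 ss)}"

text \<open>Sequence of nominal occurrences on the branch, in the order in which they appear;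
earlier first occurrence = earlier introduced.\<close>
definition nom_seq :: "nat \<Rightarrow> fm \<Rightarrow> step list \<Rightarrow> nat list" where
  "nom_seq i0 \<phi>0 ss = concat (map (noms \<circ> fst) (nodes i0 \<phi>0 ss))"

definition occurs :: "nat \<Rightarrow> fm \<Rightarrow> step list \<Rightarrow> nat \<Rightarrow> bool" where
  "occurs i0 \<phi>0 ss i \<longleftrightarrow> i \<in> set (nom_seq i0 \<phi>0 ss)"

definition intro_idx :: "nat \<Rightarrow> fm \<Rightarrow> step list \<Rightarrow> nat \<Rightarrow> nat" where
  "intro_idx i0 \<phi>0 ss j =
     (LEAST n. n < length (nom_seq i0 \<phi>0 ss) \<and> nom_seq i0 \<phi>0 ss ! n = j)"

definition prec :: "step list \<Rightarrow> (nat \<times> nat) set" where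
  "prec ss = {(i, j). \<exists>\<phi>. DiaApp i \<phi> j \<in> set ss}"

definition applied :: "step list \<Rightarrow> nat \<Rightarrow> fm \<Rightarrow> bool" where
  "applied ss i \<phi> \<longleftrightarrow> (\<exists>j. DiaApp i \<phi> j \<in> set ss)"

definition Tset :: "nat \<Rightarrow> fm \<Rightarrow> step list \<Rightarrow> nat \<Rightarrow> fm set" where
  "Tset i0 \<phi>0 ss i = {\<phi>. At i \<phi> \<in> fmls i0 \<phi>0 ss \<and> quasi_sub i \<phi> i0 \<phi>0}"

definition twins :: "nat \<Rightarrow> fm \<Rightarrow> step list \<Rightarrow> nat \<Rightarrow> nat \<Rightarrow> bool" where
  "twins i0 \<phi>0 ss i j \<longleftrightarrow> Tset i0 \<phi>0 ss i = Tset i0 \<phi>0 ss j"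

definition quasi_urfather :: "nat \<Rightarrow> fm \<Rightarrow> step list \<Rightarrow> nat \<Rightarrow> bool" where
  "quasi_urfather i0 \<phi>0 ss i \<longleftrightarrow>
     \<not> (\<exists>j k. j \<noteq> k \<and> occurs i0 \<phi>0 ss j \<and> occurs i0 \<phi>0 ss k \<and> twins i0 \<phi>0 ss j k
              \<and> (j, i) \<in> (prec ss)\<^sup>* \<and> (k, i) \<in> (prec ss)\<^sup>*)"

text \<open>is_id_urf ... i j: j is the identity urfather of i.\<close>
definition is_id_urf :: "nat \<Rightarrow> fm \<Rightarrow> step list \<Rightarrow> nat \<Rightarrow> nat \<Rightarrow> bool" where
  "is_id_urf i0 \<phi>0 ss i j \<longleftrightarrow>
     occurs i0 \<phi>0 ss i \<and> occurs i0 \<phi>0 ss j \<and> twins i0 \<phi>0 ss i j \<and> quasi_urfather i0 \<phi>0 ss j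
     \<and> (\<forall>k. occurs i0 \<phi>0 ss k \<and> twins i0 \<phi>0 ss i k \<and> quasi_urfather i0 \<phi>0 ss k
            \<longrightarrow> intro_idx i0 \<phi>0 ss j \<le> intro_idx i0 \<phi>0 ss k)"

definition urf_dom :: "nat \<Rightarrow> fm \<Rightarrow> step list \<Rightarrow> nat set" where
  "urf_dom i0 \<phi>0 ss = {i. \<exists>j. is_id_urf i0 \<phi>0 ss i j}"

definition urf :: "nat \<Rightarrow> fm \<Rightarrow> step list \<Rightarrow> nat \<Rightarrow> nat" where
  "urf i0 \<phi>0 ss i = (THE j. is_id_urf i0 \<phi>0 ss i j)"

definition id_urfathers :: "nat \<Rightarrow> fm \<Rightarrow> step list \<Rightarrow> nat set" where
  "id_urfathers i0 \<phi>0 ss = {j. \<exists>i. is_id_urf i0 \<phi>0 ss i j}"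

text \<open>Conclusions of the non-splitting rules other than [Dia], given the formulas F on the
branch and the non-accessibility formulas P on the branch.\<close>
definition concl :: "fm set \<Rightarrow> fm set \<Rightarrow> fm set" where
  "concl F P =
      {At i \<phi> | i \<phi>. At i (Neg (Neg \<phi>)) \<in> F}
    \<union> {At i \<phi> | i \<phi> \<psi>. At i (Con \<phi> \<psi>) \<in> F}
    \<union> {At i \<psi> | i \<phi> \<psi>. At i (Con \<phi> \<psi>) \<in> F}
    \<union> {At j (Neg \<phi>) | i j \<phi>. At i (Neg (Dia \<phi>)) \<in> F \<and> At i (Dia (Nom j)) \<in> F}
    \<union> {At j \<phi> | i j \<phi>. At i (Box \<phi>) \<in> F \<and> At j (Dia (Nom i)) \<in> F}
    \<union> {At j \<phi> | i j \<phi>. At i (At j \<phi>) \<in> F}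
    \<union> {At j (Neg \<phi>) | i j \<phi>. At i (Neg (At j \<phi>)) \<in> F}
    \<union> {At j \<phi> | i j \<phi>. At i \<phi> \<in> P \<and> At i (Nom j) \<in> F}
    \<union> {At i (Nom i) | i. i \<in> (\<Union>\<phi>\<in>F. set (noms \<phi>))}
    \<union> {At i (Neg (Dia (Nom i))) | i. i \<in> (\<Union>\<phi>\<in>F. set (noms \<phi>))}"

definition step_ok :: "nat \<Rightarrow> fm \<Rightarrow> step list \<Rightarrow> step \<Rightarrow> bool" where
  "step_ok i0 \<phi>0 pre s = (case s of
      Add \<phi> \<Rightarrow> \<phi> \<in> concl (fmls i0 \<phi>0 pre) (plain_fmls i0 \<phi>0 pre)
              \<or> (\<exists>i a b. At i (Neg (Con a b)) \<in> fmls i0 \<phi>0 pre \<and> (\<phi> = At i (Neg a) \<or> \<phi> = At i (Neg b)))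
    | DiaApp i \<phi> j \<Rightarrow> At i (Dia \<phi>) \<in> plain_fmls i0 \<phi>0 pre \<and> \<not> occurs i0 \<phi>0 pre j
              \<and> \<not> applied pre i \<phi> \<and> quasi_urfather i0 \<phi>0 pre i)"

definition closed :: "nat \<Rightarrow> fm \<Rightarrow> step list \<Rightarrow> bool" where
  "closed i0 \<phi>0 ss \<longleftrightarrow> (\<exists>i \<phi>. At i \<phi> \<in> fmls i0 \<phi>0 ss \<and> At i (Neg \<phi>) \<in> fmls i0 \<phi>0 ss)"

definition saturated :: "nat \<Rightarrow> fm \<Rightarrow> step list \<Rightarrow> bool" where
  "saturated i0 \<phi>0 ss \<longleftrightarrow>
     concl (fmls i0 \<phi>0 ss) (plain_fmls i0 \<phi>0 ss) \<subseteq> fmls i0 \<phi>0 ss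
   \<and> (\<forall>i a b. At i (Neg (Con a b)) \<in> fmls i0 \<phi>0 ss
        \<longrightarrow> At i (Neg a) \<in> fmls i0 \<phi>0 ss \<or> At i (Neg b) \<in> fmls i0 \<phi>0 ss)
   \<and> (\<forall>i \<phi>. At i (Dia \<phi>) \<in> plain_fmls i0 \<phi>0 ss \<and> quasi_urfather i0 \<phi>0 ss i
        \<longrightarrow> applied ss i \<phi>)"

definition is_branch :: "nat \<Rightarrow> fm \<Rightarrow> step list \<Rightarrow> bool" where
  "is_branch i0 \<phi>0 ss \<longleftrightarrow> i0 \<notin> set (noms \<phi>0) \<and>
     (\<forall>n < length ss. step_ok i0 \<phi>0 (take n ss) (ss ! n)
        \<and> \<not> closed i0 \<phi>0 (take n ss) \<and> \<not> saturated i0 \<phi>0 (take n ss))"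

definition branch_model :: "nat \<Rightarrow> fm \<Rightarrow> step list \<Rightarrow> nat model" where
  "branch_model i0 \<phi>0 ss = \<lparr>
     W = id_urfathers i0 \<phi>0 ss,
     Rel = {(urf i0 \<phi>0 ss i, urf i0 \<phi>0 ss j) | i j.
              At i (Dia (Nom j)) \<in> fmls i0 \<phi>0 ss \<and> i \<in> urf_dom i0 \<phi>0 ss \<and> j \<in> urf_dom i0 \<phi>0 ss}
         \<union> {(urf i0 \<phi>0 ss j, urf i0 \<phi>0 ss i) | i j.
              At i (Dia (Nom j)) \<in> fmls i0 \<phi>0 ss \<and> i \<in> urf_dom i0 \<phi>0 ss \<and> j \<in> urf_dom i0 \<phi>0 ss},
     VP = (\<lambda>p. {urf i0 \<phi>0 ss i | i. At i (Pro p) \<in> fmls i0 \<phi>0 ss \<and> i \<in> urf_dom i0 \<phi>0 ss}),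
     VN = (\<lambda>i. if i \<in> urf_dom i0 \<phi>0 ss then urf i0 \<phi>0 ss i else i0) \<rparr>"

end

theory Submission
  imports Defs
begin


definition swp :: "'w \<Rightarrow> 'w + ('w \<times> nat) \<Rightarrow> 'w + ('w \<times> nat)" where
  "swp w x = (if x = Inr (w, 0) then Inr (w, 1) else if x = Inr (w, 1) then Inr (w, 0) else x)"

lemma swp_swp[simp]: "swp w (swp w x) = x"
  unfolding swp_def by auto

lemma swp_alpha[simp]: "alpha (swp w x) = alpha x"
  unfolding swp_def by (cases x) auto

lemma swp_isl[simp]: "isl (swp w x) = isl x"
  unfolding swp_def by (cases x) auto

lemma swp_inj[simp]: "(swp w x = swp w y) = (x = y)"
  by (metis swp_swp)

lemma swp_bw:
  assumes "w \<in> refl_worlds M"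
  shows "(swp w x \<in> bull_worlds M) = (x \<in> bull_worlds M)"
  using assms unfolding swp_def bull_worlds_def refl_worlds_def by auto

lemma swp_Inr: "(\<exists>m. swp w x = Inr (w', m)) = (\<exists>m. x = Inr (w', m))"
  unfolding swp_def by (cases x) auto

lemma swp_R:
  assumes "w \<in> refl_worlds M"
  shows "((swp w x, swp w y) \<in> Rel (bulldoze M)) = ((x, y) \<in> Rel (bulldoze M))"
proof -
  have a: "(\<exists>w' m v' n. swp w x = Inr (w', m) \<and> swp w y = Inr (v', n) \<and> w' \<noteq> v' \<and> (w', v') \<in> Rel M)
     = (\<exists>w' m v' n. x = Inr (w', m) \<and> y = Inr (v', n) \<and> w' \<noteq> v' \<and> (w', v') \<in> Rel M)"
    using swp_Inr[of w x] swp_Inr[of w y] by metis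
  show ?thesis
    unfolding bulldoze_def using a swp_bw[OF assms] by simp
qed

lemma swp_VN:
  assumes "VN M j \<noteq> w"
  shows "swp w (VN (bulldoze M) j) = VN (bulldoze M) j"
  using assms unfolding swp_def bulldoze_def by auto

lemma swap_sat:
  assumes "w \<in> refl_worlds M"
  shows "(\<forall>j. Nom j \<in> subs \<psi> \<longrightarrow> VN M j \<noteq> w) \<Longrightarrow> sat (bulldoze M) (swp w x) \<psi> = sat (bulldoze M) x \<psi>"
proof (induction \<psi> arbitrary: x)
  case (Pro p)
  then show ?case using swp_bw[OF assms] by (simp add: bulldoze_def)
next
  case (Nom j)
  then have "swp w (VN (bulldoze M) j) = VN (bulldoze M) j" using swp_VN by (metis insertI1 subs.simps(2))
  then show ?case by (metis sat.simps(2) swp_inj)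
next
  case (Dia \<psi>)
  have "(\<exists>v. (swp w x, v) \<in> Rel (bulldoze M) \<and> sat (bulldoze M) v \<psi>)
     = (\<exists>v. (swp w x, swp w v) \<in> Rel (bulldoze M) \<and> sat (bulldoze M) (swp w v) \<psi>)"
    by (metis swp_swp)
  also have "\<dots> = (\<exists>v. (x, v) \<in> Rel (bulldoze M) \<and> sat (bulldoze M) v \<psi>)"
    using Dia swp_R[OF assms] by simp
  finally show ?case by simp
qed auto

definition bw :: "'w model \<Rightarrow> 'w \<Rightarrow> 'w + ('w \<times> nat)" where
  "bw M w = (if w \<in> refl_worlds M then Inr (w, 0) else Inl w)"

lemma bw_alpha[simp]: "alpha (bw M w) = w"
  unfolding bw_def by auto

lemma bw_inj: "bw M v = bw M w \<Longrightarrow> v = w"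
  by (metis bw_alpha)

lemma bw_bw: "w \<in> W M \<Longrightarrow> bw M w \<in> bull_worlds M"
  unfolding bw_def bull_worlds_def refl_worlds_def by auto

lemma VN_b: "VN (bulldoze M) j = bw M (VN M j)"
  unfolding bulldoze_def bw_def by simp

lemma bRel_iff: "(x, y) \<in> Rel (bulldoze M) \<longleftrightarrow> x \<in> bull_worlds M \<and> y \<in> bull_worlds M \<and>
              (((isl x \<or> isl y) \<and> (alpha x, alpha y) \<in> Rel M)
               \<or> (\<exists>w' m v' n. x = Inr (w', m) \<and> y = Inr (v', n) \<and> w' \<noteq> v' \<and> (w', v') \<in> Rel M)
               \<or> (x \<noteq> y \<and> alpha x = alpha y))"
  unfolding bulldoze_def by simp

lemma bR_fwd:
  assumes "w \<in> W M" "v \<in> W M" "(w, v) \<in> Rel M" "v \<noteq> w"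
  shows "(bw M w, bw M v) \<in> Rel (bulldoze M)"
proof -
  have "((isl (bw M w) \<or> isl (bw M v)) \<and> (alpha (bw M w), alpha (bw M v)) \<in> Rel M)
               \<or> (\<exists>w' m v' n. bw M w = Inr (w', m) \<and> bw M v = Inr (v', n) \<and> w' \<noteq> v' \<and> (w', v') \<in> Rel M)"
  proof (cases "w \<in> refl_worlds M \<and> v \<in> refl_worlds M")
    case True
    then have "bw M w = Inr (w, 0)" "bw M v = Inr (v, 0)" unfolding bw_def by simp_all
    then show ?thesis using assms(3,4) by blast
  next
    case False
    then have "isl (bw M w) \<or> isl (bw M v)" unfolding bw_def by auto
    then show ?thesis using assms(3) by simp
  qed
  moreover have "bw M w \<in> bull_worlds M" by (rule bw_bw[OF assms(1)])
  moreover have "bw M v \<in> bull_worlds M" by (rule bw_bw[OF assms(2)])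
  ultimately show ?thesis unfolding bRel_iff by (metis (no_types, lifting))
qed

lemma bR_self:
  assumes "w \<in> refl_worlds M"
  shows "(Inr (w, 0), Inr (w, 1)) \<in> Rel (bulldoze M)"
  using assms unfolding bulldoze_def bull_worlds_def by simp

lemma bR_back:
  assumes "(bw M w, y) \<in> Rel (bulldoze M)" "w \<in> W M"
  shows "(w, alpha y) \<in> Rel M"
proof -
  have y: "y \<in> bull_worlds M" and
    d: "((isl (bw M w) \<or> isl y) \<and> (w, alpha y) \<in> Rel M)
               \<or> (\<exists>w' m v' n. bw M w = Inr (w', m) \<and> y = Inr (v', n) \<and> w' \<noteq> v' \<and> (w', v') \<in> Rel M)
               \<or> (bw M w \<noteq> y \<and> w = alpha y)"
    using assms(1) unfolding bulldoze_def by auto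
  show ?thesis
  proof (cases "w \<in> refl_worlds M")
    case True
    then have "(w, w) \<in> Rel M" unfolding refl_worlds_def by simp
    then show ?thesis using d True unfolding bw_def by auto
  next
    case False
    have "bw M w \<noteq> y \<longrightarrow> w \<noteq> alpha y"
      using y False unfolding bull_worlds_def bw_def by auto
    then show ?thesis using d False unfolding bw_def by auto
  qed
qed

lemma bw_cases:
  assumes "y \<in> bull_worlds M"
  shows "y = bw M (alpha y) \<or> (alpha y \<in> refl_worlds M \<and> y = swp (alpha y) (bw M (alpha y)))"
proof -
  consider (l) a where "y = Inl a" "a \<notin> refl_worlds M"
    | (r) a n where "y = Inr (a, n)" "a \<in> refl_worlds M" "n = 0 \<or> n = 1"
    using assms unfolding bull_worlds_def by blast
  then show ?thesis
  proof cases
    case l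
    then show ?thesis unfolding bw_def by simp
  next
    case r
    then show ?thesis unfolding bw_def swp_def by auto
  qed
qed

lemma bRel_bw: "(x, y) \<in> Rel (bulldoze M) \<Longrightarrow> y \<in> bull_worlds M"
  unfolding bulldoze_def by auto



lemma subs_self: "\<phi> \<in> subs \<phi>"
  by (cases \<phi>) auto

lemma subs_trans: "\<psi> \<in> subs \<phi> \<Longrightarrow> subs \<psi> \<subseteq> subs \<phi>"
  by (induction \<phi>) auto

lemma subs_noms: "\<psi> \<in> subs \<phi> \<Longrightarrow> set (noms \<psi>) \<subseteq> set (noms \<phi>)"
  by (induction \<phi>) auto

lemma nom_subs_noms: "Nom j \<in> subs \<phi> \<Longrightarrow> j \<in> set (noms \<phi>)"
  using subs_noms by fastforce

lemma root_fmls: "At i0 \<phi>0 \<in> fmls i0 \<phi>0 ss"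
  unfolding fmls_def nodes_def by force

lemma occurs_root: "j \<in> set (noms \<phi>0) \<Longrightarrow> occurs i0 \<phi>0 ss j"
  unfolding occurs_def nom_seq_def nodes_def by simp

lemma true_nodes: "(\<phi>, True) \<in> set (nodes i0 \<phi>0 ss) \<Longrightarrow> \<exists>a b. \<phi> = At a (Dia (Nom b))"
proof -
  assume "(\<phi>, True) \<in> set (nodes i0 \<phi>0 ss)"
  then obtain s where "s \<in> set ss" "(\<phi>, True) \<in> set (step_nodes s)"
    unfolding nodes_def by auto
  then show ?thesis by (cases s rule: step.exhaust) auto
qed

lemma plain: "\<phi> \<in> fmls i0 \<phi>0 ss \<Longrightarrow> \<not> (\<exists>a b. \<phi> = At a (Dia (Nom b))) \<Longrightarrow> \<phi> \<in> plain_fmls i0 \<phi>0 ss"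
proof -
  assume a: "\<phi> \<in> fmls i0 \<phi>0 ss" and b: "\<not> (\<exists>a b. \<phi> = At a (Dia (Nom b)))"
  from a obtain c where c: "(\<phi>, c) \<in> set (nodes i0 \<phi>0 ss)" unfolding fmls_def by force
  have "c = False" using true_nodes[of \<phi> i0 \<phi>0 ss] b c by (cases c) auto
  then show ?thesis using c unfolding plain_fmls_def by simp
qed

lemma concl_ref: "\<phi> \<in> F \<Longrightarrow> i \<in> set (noms \<phi>) \<Longrightarrow> At i (Nom i) \<in> concl F P"
  unfolding concl_def
  apply (rule UnI1)
  apply (rule UnI2)
  by blast

lemma concl_irr: "\<phi> \<in> F \<Longrightarrow> i \<in> set (noms \<phi>) \<Longrightarrow> At i (Neg (Dia (Nom i))) \<in> concl F P"
  unfolding concl_def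
  apply (rule UnI2)
  by blast

lemma concl_id: "At i \<phi> \<in> P \<Longrightarrow> At i (Nom j) \<in> F \<Longrightarrow> At j \<phi> \<in> concl F P"
  unfolding concl_def
  apply (rule UnI1)
  apply (rule UnI1)
  apply (rule UnI2)
  by blast

lemma concl_negdia: "At i (Neg (Dia \<phi>)) \<in> F \<Longrightarrow> At i (Dia (Nom j)) \<in> F \<Longrightarrow> At j (Neg \<phi>) \<in> concl F P"
  unfolding concl_def
  apply (rule UnI1)
  apply (rule UnI1)
  apply (rule UnI1)
  apply (rule UnI1)
  apply (rule UnI1)
  apply (rule UnI1)
  apply (rule UnI2)
  by blast

lemma qu_root:
  assumes "is_branch i0 \<phi>0 ss" "j \<in> set (noms \<phi>0)"
  shows "quasi_urfather i0 \<phi>0 ss j"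
proof -
  have "k = j" if "(k, j) \<in> (prec ss)\<^sup>*" for k
    using that
  proof (cases rule: rtranclE)
    case (step y)
    then obtain \<psi> where "DiaApp y \<psi> j \<in> set ss" unfolding prec_def by auto
    then obtain n where n: "n < length ss" "ss ! n = DiaApp y \<psi> j" by (metis in_set_conv_nth)
    then have "step_ok i0 \<phi>0 (take n ss) (ss ! n)" using assms(1) unfolding is_branch_def by blast
    then have "\<not> occurs i0 \<phi>0 (take n ss) j" using n(2) unfolding step_ok_def by simp
    then show ?thesis using occurs_root[OF assms(2)] by blast
  qed simp
  then show ?thesis unfolding quasi_urfather_def by blast
qed

lemma intro_idx_nth: "occurs i0 \<phi>0 ss j \<Longrightarrow> nom_seq i0 \<phi>0 ss ! intro_idx i0 \<phi>0 ss j = j"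
  unfolding occurs_def intro_idx_def
  by (rule LeastI2_ex) (auto simp: in_set_conv_nth)

lemma urf_unique: "is_id_urf i0 \<phi>0 ss i j \<Longrightarrow> is_id_urf i0 \<phi>0 ss i k \<Longrightarrow> j = k"
proof -
  assume a: "is_id_urf i0 \<phi>0 ss i j" and b: "is_id_urf i0 \<phi>0 ss i k"
  then have "intro_idx i0 \<phi>0 ss j = intro_idx i0 \<phi>0 ss k"
    unfolding is_id_urf_def by (meson le_antisym)
  then show "j = k" using a b intro_idx_nth unfolding is_id_urf_def by metis
qed

lemma urf_is: "i \<in> urf_dom i0 \<phi>0 ss \<Longrightarrow> is_id_urf i0 \<phi>0 ss i (urf i0 \<phi>0 ss i)"
proof -
  assume "i \<in> urf_dom i0 \<phi>0 ss"
  then obtain j where "is_id_urf i0 \<phi>0 ss i j" unfolding urf_dom_def by blast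
  then have "\<exists>!j. is_id_urf i0 \<phi>0 ss i j" using urf_unique by blast
  then show ?thesis unfolding urf_def by (rule theI')
qed

lemma urf_W: "i \<in> urf_dom i0 \<phi>0 ss \<Longrightarrow> urf i0 \<phi>0 ss i \<in> id_urfathers i0 \<phi>0 ss"
  using urf_is unfolding id_urfathers_def by blast

lemma dom_root:
  assumes "is_branch i0 \<phi>0 ss" "j \<in> set (noms \<phi>0)"
  shows "j \<in> urf_dom i0 \<phi>0 ss"
proof -
  let ?P = "\<lambda>k. occurs i0 \<phi>0 ss k \<and> twins i0 \<phi>0 ss j k \<and> quasi_urfather i0 \<phi>0 ss k"
  have "?P j" using occurs_root[OF assms(2)] qu_root[OF assms] unfolding twins_def by simp
  then obtain k where "?P k" "\<forall>y. ?P y \<longrightarrow> intro_idx i0 \<phi>0 ss k \<le> intro_idx i0 \<phi>0 ss y"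
    using ex_has_least_nat[of ?P j "intro_idx i0 \<phi>0 ss"] by blast
  then have "is_id_urf i0 \<phi>0 ss j k" using \<open>?P j\<close> unfolding is_id_urf_def by blast
  then show ?thesis unfolding urf_dom_def by blast
qed

lemma R_W:
  assumes "(x, y) \<in> Rel (branch_model i0 \<phi>0 ss)"
  shows "x \<in> id_urfathers i0 \<phi>0 ss \<and> y \<in> id_urfathers i0 \<phi>0 ss"
  using assms urf_W unfolding branch_model_def by auto

lemma key:
  assumes br: "is_branch i0 \<phi>0 ss" and nc: "\<not> closed i0 \<phi>0 ss" and sa: "saturated i0 \<phi>0 ss"
    and vv: "(v, v) \<in> Rel (branch_model i0 \<phi>0 ss)" and jN: "Nom j \<in> subs \<phi>0"
  shows "urf i0 \<phi>0 ss j \<noteq> v"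
proof
  assume jv: "urf i0 \<phi>0 ss j = v"
  have j: "j \<in> set (noms \<phi>0)" using nom_subs_noms[OF jN] .
  let ?F = "fmls i0 \<phi>0 ss" and ?P = "plain_fmls i0 \<phi>0 ss"
  have cF: "concl ?F ?P \<subseteq> ?F" using sa unfolding saturated_def by blast
  obtain a b where ab: "At a (Dia (Nom b)) \<in> ?F" "a \<in> urf_dom i0 \<phi>0 ss" "b \<in> urf_dom i0 \<phi>0 ss"
    "urf i0 \<phi>0 ss a = v" "urf i0 \<phi>0 ss b = v"
    using vv unfolding branch_model_def by auto
  have jd: "j \<in> urf_dom i0 \<phi>0 ss" using dom_root[OF br j] .
  have T: "Tset i0 \<phi>0 ss a = Tset i0 \<phi>0 ss j" "Tset i0 \<phi>0 ss b = Tset i0 \<phi>0 ss j"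
    using urf_is[OF ab(2)] urf_is[OF ab(3)] urf_is[OF jd] ab(4,5) jv
    unfolding is_id_urf_def twins_def by auto
  have "At j (Nom j) \<in> ?F" using cF concl_ref[OF root_fmls, of j i0 \<phi>0 ss] j by auto
  moreover have "quasi_sub j (Nom j) i0 \<phi>0" using jN unfolding quasi_sub_def by blast
  ultimately have "Nom j \<in> Tset i0 \<phi>0 ss j" unfolding Tset_def by blast
  then have aj: "At a (Nom j) \<in> ?F" and bj: "At b (Nom j) \<in> ?F" using T unfolding Tset_def by auto
  have "At a (Nom a) \<in> ?F" using cF concl_ref[OF ab(1), of a] by auto
  then have "At a (Nom a) \<in> ?P" using plain by blast
  then have ja: "At j (Nom a) \<in> ?F" using cF concl_id[OF _ aj] by blast
  have "At j (Neg (Dia (Nom j))) \<in> ?F" using cF concl_irr[OF root_fmls, of j i0 \<phi>0 ss] j by auto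
  then have "At j (Neg (Dia (Nom j))) \<in> ?P" using plain by blast
  then have "At a (Neg (Dia (Nom j))) \<in> ?F" using cF concl_id[OF _ ja] by blast
  then have "At b (Neg (Nom j)) \<in> ?F" using cF concl_negdia[OF _ ab(1)] by blast
  then show False using nc bj unfolding closed_def by blast
qed



lemma gen:
  fixes M :: "'w model"
  assumes RW: "\<And>x y. (x, y) \<in> Rel M \<Longrightarrow> x \<in> W M \<and> y \<in> W M"
    and NV: "\<And>v j. (v, v) \<in> Rel M \<Longrightarrow> Nom j \<in> subs \<phi>0 \<Longrightarrow> VN M j \<noteq> v"
    and VW: "\<And>j. j \<in> set (noms \<phi>0) \<Longrightarrow> VN M j \<in> W M"
  shows "\<psi> \<in> subs \<phi>0 \<Longrightarrow> w \<in> W M \<Longrightarrow> sat M w \<psi> = sat (bulldoze M) (bw M w) \<psi>"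
proof (induction \<psi> arbitrary: w)
  case (Pro p)
  then show ?case using bw_bw[of w M] by (simp add: bulldoze_def)
next
  case (Nom j)
  then show ?case using bw_inj[of M w "VN M j"] by (auto simp: VN_b)
next
  case (Neg \<psi>)
  have "\<psi> \<in> subs \<phi>0" using subs_trans[OF Neg.prems(1)] subs_self[of \<psi>] by auto
  then show ?case using Neg.IH Neg.prems(2) by simp
next
  case (Con \<psi>1 \<psi>2)
  have "\<psi>1 \<in> subs \<phi>0" "\<psi>2 \<in> subs \<phi>0"
    using subs_trans[OF Con.prems(1)] subs_self[of \<psi>1] subs_self[of \<psi>2] by auto
  then show ?case using Con.IH Con.prems(2) by simp
next
  case (At j \<psi>)
  have j: "j \<in> set (noms \<phi>0)" using subs_noms[OF At.prems(1)] by simp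
  have "\<psi> \<in> subs \<phi>0" using subs_trans[OF At.prems(1)] subs_self[of \<psi>] by auto
  then show ?case using At.IH VW[OF j] by (simp add: VN_b)
next
  case (Dia \<psi>)
  have ps: "\<psi> \<in> subs \<phi>0" using subs_trans[OF Dia.prems(1)] subs_self[of \<psi>] by auto
  have sw: "sat (bulldoze M) (swp v x) \<psi> = sat (bulldoze M) x \<psi>" if "v \<in> refl_worlds M" for v x
  proof -
    have "(v, v) \<in> Rel M" using that unfolding refl_worlds_def by simp
    then have "\<forall>j. Nom j \<in> subs \<psi> \<longrightarrow> VN M j \<noteq> v"
      using NV subs_trans[OF ps] by blast
    then show ?thesis using swap_sat[OF that] by blast
  qed
  show ?case
  proof
    assume "sat M w (Dia \<psi>)"
    then obtain v where v: "(w, v) \<in> Rel M" "sat M v \<psi>" by auto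
    have vW: "v \<in> W M" using RW[OF v(1)] by simp
    have ih: "sat (bulldoze M) (bw M v) \<psi>" using Dia.IH[OF ps vW] v(2) by simp
    show "sat (bulldoze M) (bw M w) (Dia \<psi>)"
    proof (cases "v = w")
      case False
      then show ?thesis using bR_fwd[OF Dia.prems(2) vW v(1) False] ih by auto
    next
      case True
      then have r: "w \<in> refl_worlds M" using v(1) Dia.prems(2) unfolding refl_worlds_def by simp
      then have bw: "bw M w = Inr (w, 0)" unfolding bw_def by simp
      have "swp w (Inr (w, 0)) = Inr (w, 1)" unfolding swp_def by simp
      then have "sat (bulldoze M) (Inr (w, 1)) \<psi>" using sw[OF r, of "Inr (w, 0)"] ih True bw by simp
      then show ?thesis using bR_self[OF r] bw by auto
    qed
  next
    assume "sat (bulldoze M) (bw M w) (Dia \<psi>)"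
    then obtain y where y: "(bw M w, y) \<in> Rel (bulldoze M)" "sat (bulldoze M) y \<psi>" by auto
    have R: "(w, alpha y) \<in> Rel M" using bR_back[OF y(1) Dia.prems(2)] .
    have vW: "alpha y \<in> W M" using RW[OF R] by simp
    have "sat (bulldoze M) (bw M (alpha y)) \<psi>"
      using bw_cases[OF bRel_bw[OF y(1)]] y(2) sw by metis
    then have "sat M (alpha y) \<psi>" using Dia.IH[OF ps vW] by simp
    then show "sat M w (Dia \<psi>)" using R by auto
  qed
qed

theorem lemma13:
  fixes i0 :: nat and \<phi>0 :: fm and ss :: "step list" and i :: nat and \<phi> :: fm
  assumes "is_branch i0 \<phi>0 ss"
    and "\<not> closed i0 \<phi>0 ss"
    and "saturated i0 \<phi>0 ss"
    and "i \<in> id_urfathers i0 \<phi>0 ss"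
    and "quasi_sub i \<phi> i0 \<phi>0"
  shows "sat (branch_model i0 \<phi>0 ss) i \<phi> \<longleftrightarrow>
         sat (bulldoze (branch_model i0 \<phi>0 ss))
             (if i \<in> refl_worlds (branch_model i0 \<phi>0 ss) then Inr (i, 0) else Inl i) \<phi>"
proof -
  let ?M = "branch_model i0 \<phi>0 ss"
  have WM: "W ?M = id_urfathers i0 \<phi>0 ss" unfolding branch_model_def by simp
  have VNd: "VN ?M j = urf i0 \<phi>0 ss j" if "j \<in> urf_dom i0 \<phi>0 ss" for j
    using that unfolding branch_model_def by simp
  have RW: "\<And>x y. (x, y) \<in> Rel ?M \<Longrightarrow> x \<in> W ?M \<and> y \<in> W ?M"
    using R_W WM by metis
  have NV: "\<And>v j. (v, v) \<in> Rel ?M \<Longrightarrow> Nom j \<in> subs \<phi>0 \<Longrightarrow> VN ?M j \<noteq> v"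
  proof -
    fix v j assume "(v, v) \<in> Rel ?M" "Nom j \<in> subs \<phi>0"
    moreover have "j \<in> urf_dom i0 \<phi>0 ss"
      using dom_root[OF assms(1) nom_subs_noms[OF \<open>Nom j \<in> subs \<phi>0\<close>]] .
    ultimately show "VN ?M j \<noteq> v" using key[OF assms(1,2,3)] VNd by metis
  qed
  have VW: "\<And>j. j \<in> set (noms \<phi>0) \<Longrightarrow> VN ?M j \<in> W ?M"
    using dom_root[OF assms(1)] VNd urf_W WM by metis
  have iW: "i \<in> W ?M" using assms(4) WM by simp
  have bwi: "(if i \<in> refl_worlds ?M then Inr (i, 0) else Inl i) = bw ?M i" unfolding bw_def by simp
  have G: "sat ?M w \<psi> = sat (bulldoze ?M) (bw ?M w) \<psi>" if "\<psi> \<in> subs \<phi>0" "w \<in> W ?M" for \<psi> w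
    apply (rule gen[where M="?M" and ?\<phi>0.0=\<phi>0])
        apply (erule RW)
       apply (erule (1) NV)
      apply (erule VW)
    using that by auto
  show ?thesis
  proof (cases "\<phi> \<in> subs \<phi>0")
    case True
    then show ?thesis using G[OF True iW] bwi by simp
  next
    case False
    then obtain \<chi> where "\<phi> = Neg \<chi>" "\<chi> \<in> subs \<phi>0" using assms(5) unfolding quasi_sub_def by blast
    then show ?thesis using G[OF _ iW, of \<chi>] bwi by simp
  qed
qed

end
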